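(* Let $0<a<b$ and, for $i=1,2$, let $f_i=(f_{i,1},\dots,f_{i,m_i})^T$ be a vector of linearly independent continuously differentiable functions on $[a,b]$. For $i=1,2$ fix design points $a=t_{i,1}<t_{i,2}<\dots<t_{i,n_i}=b$, and set $$M_i=\int_a^b\dot f_i(t)\dot f_i^T(t)\,dt,\qquad C_i=M_i+\frac{f_i(a)f_i^T(a)}{a},$$ $$B_i=\sum_{j=2}^{n_i}\frac{[f_i(t_{i,j})-f_i(t_{i,j-1})][f_i(t_{i,j})-f_i(t_{i,j-1})]^T}{t_{i,j}-t_{i,j-1}}.$$ Assume $C_i$ and $B_i$ are non-singular for $i=1,2$. For weight vectors $\omega=(\omega_{i,j})_{i=1,2;\,j=2,\dots,n_i}$ with $\omega_{i,j}\in\mathbb{R}^{m_i}$ satisfying the unbiasedness constraints $$M_i=\sum_{j=2}^{n_i}\omega_{i,j}\big(f_i(t_{i,j})-f_i(t_{i,j-1})\big)^T,\qquad i=1,2,$$ define for $t\in[a,b]$ $$g_n(t,\omega)=\sum_{i=1}^2 f_i^T(t)\Big\{-C_i^{-1}M_iC_i^{-1}+\sum_{j=2}^{n_i}(t_{i,j}-t_{i,j-1})\,C_i^{-1}\omega_{i,j}\omega_{i,j}^TC_i^{-1}+C_i^{-1}\Big\}f_i(t),$$ and $\mu_{p,n}(\omega)=\big(\int_a^b g_n(t,\omega)^p\,dt\big)^{1/p}$ for $p\in[1,\infty)$, $\mu_{\infty,n}(\omega)=\sup_{t\in[a,b]}g_n(t,\omega)$. Then the weights $$\omega_{i,j}^*=M_iB_i^{-1}\frac{f_i(t_{i,j})-f_i(t_{i,j-1})}{t_{i,j}-t_{i,j-1}},\qquad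 j=2,\dots,n_i,\ i=1,2,$$ satisfy the unbiasedness constraints, and for every $p\in[1,\infty]$ they minimise $\mu_{p,n}(\omega)$ over all weight vectors satisfying the unbiasedness constraints. Equivalently, in terms of $\gamma_{i,j}=\omega_{i,j}\sqrt{t_{i,j}-t_{i,j-1}}$, the minimiser is $\gamma^*_{i,j}=M_iB_i^{-1}\frac{f_i(t_{i,j})-f_i(t_{i,j-1})}{\sqrt{t_{i,j}-t_{i,j-1}}}$.
   Context: Interpretation: in the models $Y_i(t_{i,j})=f_i^T(t_{i,j})\theta_i+\varepsilon_i(t_{i,j})$ with independent Brownian motion errors $\varepsilon_1,\varepsilon_2$, the estimators $\hat\theta_{i,n_i}=C_i^{-1}\{\sum_{j=2}^{n_i}\omega_{i,j}(Y_i(t_{i,j})-Y_i(t_{i,j-1}))+\frac{f_i(a)}{a}Y_i(a)\}$ are unbiased exactly under the stated constraints, and then $g_n(t,\omega)=\mathrm{Var}(f_1^T(t)\hat\theta_{1,n_1}-f_2^T(t)\hat\theta_{2,n_2})$; the claim is the purely matrix-analytic minimisation statement above. *)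

theory Defs
  imports "HOL-Analysis.Analysis"
begin

definition outer :: "real^'m \<Rightarrow> real^'m \<Rightarrow> real^'m^'m" where
  "outer x y = (\<chi> r c. x $ r * y $ c)"

definition lin_indep_on :: "real set \<Rightarrow> (real \<Rightarrow> real^'m) \<Rightarrow> bool" where
  "lin_indep_on S f \<longleftrightarrow> (\<forall>c::real^'m. (\<forall>s\<in>S. c \<bullet> f s = 0) \<longrightarrow> c = 0)"

definition Mmat :: "real \<Rightarrow> real \<Rightarrow> (real \<Rightarrow> real^'m) \<Rightarrow> real^'m^'m" where
  "Mmat a b f' = (\<chi> r c. integral {a..b} (\<lambda>s. f' s $ r * f' s $ c))"

definition Cmat :: "real \<Rightarrow> real \<Rightarrow> (real \<Rightarrow> real^'m) \<Rightarrow> (real \<Rightarrow> real^'m) \<Rightarrow> real^'m^'m" where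
  "Cmat a b f f' = Mmat a b f' + (1 / a) *\<^sub>R outer (f a) (f a)"

definition Bmat :: "(real \<Rightarrow> real^'m) \<Rightarrow> (nat \<Rightarrow> real) \<Rightarrow> nat \<Rightarrow> real^'m^'m" where
  "Bmat f t n = (\<Sum>j\<in>{2..n}. (1 / (t j - t (j - 1))) *\<^sub>R
      outer (f (t j) - f (t (j - 1))) (f (t j) - f (t (j - 1))))"

definition unbiased :: "real \<Rightarrow> real \<Rightarrow> (real \<Rightarrow> real^'m) \<Rightarrow> (real \<Rightarrow> real^'m)
    \<Rightarrow> (nat \<Rightarrow> real) \<Rightarrow> nat \<Rightarrow> (nat \<Rightarrow> real^'m) \<Rightarrow> bool" where
  "unbiased a b f f' t n w \<longleftrightarrow>
     Mmat a b f' = (\<Sum>j\<in>{2..n}. outer (w j) (f (t j) - f (t (j - 1))))"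

definition Kmat :: "real \<Rightarrow> real \<Rightarrow> (real \<Rightarrow> real^'m) \<Rightarrow> (real \<Rightarrow> real^'m)
    \<Rightarrow> (nat \<Rightarrow> real) \<Rightarrow> nat \<Rightarrow> (nat \<Rightarrow> real^'m) \<Rightarrow> real^'m^'m" where
  "Kmat a b f f' t n w =
     (let Ci = matrix_inv (Cmat a b f f') in
       - (Ci ** Mmat a b f' ** Ci)
       + (\<Sum>j\<in>{2..n}. (t j - t (j - 1)) *\<^sub>R (Ci ** outer (w j) (w j) ** Ci))
       + Ci)"

definition gpart :: "real \<Rightarrow> real \<Rightarrow> (real \<Rightarrow> real^'m) \<Rightarrow> (real \<Rightarrow> real^'m)
    \<Rightarrow> (nat \<Rightarrow> real) \<Rightarrow> nat \<Rightarrow> (nat \<Rightarrow> real^'m) \<Rightarrow> real \<Rightarrow> real" where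
  "gpart a b f f' t n w s = f s \<bullet> (Kmat a b f f' t n w *v f s)"

definition wopt :: "real \<Rightarrow> real \<Rightarrow> (real \<Rightarrow> real^'m) \<Rightarrow> (real \<Rightarrow> real^'m)
    \<Rightarrow> (nat \<Rightarrow> real) \<Rightarrow> nat \<Rightarrow> nat \<Rightarrow> real^'m" where
  "wopt a b f f' t n j = (Mmat a b f' ** matrix_inv (Bmat f t n)) *v
      ((1 / (t j - t (j - 1))) *\<^sub>R (f (t j) - f (t (j - 1))))"

definition mu_p :: "real \<Rightarrow> real \<Rightarrow> real \<Rightarrow> (real \<Rightarrow> real) \<Rightarrow> real" where
  "mu_p a b p g = (integral {a..b} (\<lambda>s. g s powr p)) powr (1 / p)"

definition mu_inf :: "real \<Rightarrow> real \<Rightarrow> (real \<Rightarrow> real) \<Rightarrow> real" where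
  "mu_inf a b g = (SUP s\<in>{a..b}. g s)"

definition design :: "real \<Rightarrow> real \<Rightarrow> (nat \<Rightarrow> real) \<Rightarrow> nat \<Rightarrow> bool" where
  "design a b t n \<longleftrightarrow> 2 \<le> n \<and> t 1 = a \<and> t n = b \<and> (\<forall>j\<in>{2..n}. t (j - 1) < t j)"

definition C1_with :: "real \<Rightarrow> real \<Rightarrow> (real \<Rightarrow> real^'m) \<Rightarrow> (real \<Rightarrow> real^'m) \<Rightarrow> bool" where
  "C1_with a b f f' \<longleftrightarrow> (\<forall>s\<in>{a..b}. (f has_vector_derivative f' s) (at s within {a..b}))
      \<and> continuous_on {a..b} f'"

end

theory Submission
  imports Defs
begin

lemma dot_mv: "(x::real^'n) \<bullet> (A *v y) = (transpose A *v x) \<bullet> y"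
proof -
  have "x \<bullet> (A *v y) = (\<Sum>i\<in>UNIV. \<Sum>j\<in>UNIV. x$i * (A$i$j * y$j))"
    by (simp add: inner_vec_def matrix_vector_mult_def sum_distrib_left)
  also have "\<dots> = (\<Sum>j\<in>UNIV. \<Sum>i\<in>UNIV. x$i * (A$i$j * y$j))"
    by (rule sum.swap)
  also have "\<dots> = (transpose A *v x) \<bullet> y"
    by (simp add: inner_vec_def matrix_vector_mult_def transpose_def sum_distrib_left mult_ac)
  finally show ?thesis .
qed

lemma outer_mv: "outer x y *v (z::real^'n) = (y \<bullet> z) *\<^sub>R x"
  unfolding outer_def matrix_vector_mult_def inner_vec_def
  by (simp add: vec_eq_iff sum_distrib_left mult_ac)

lemma mat_outer: "(P::real^'n^'n) ** outer x y = outer (P *v x) y"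
  unfolding outer_def matrix_vector_mult_def matrix_matrix_mult_def
  by (simp add: vec_eq_iff sum_distrib_left mult_ac)

lemma outer_scale: "outer (c *\<^sub>R x) (y::real^'n) = c *\<^sub>R outer x y"
  unfolding outer_def by (simp add: vec_eq_iff)

lemma transpose_outer: "transpose (outer x (y::real^'n)) = outer y x"
  unfolding outer_def transpose_def by (simp add: vec_eq_iff)

lemma sum_mv: "(\<Sum>j\<in>S. A j) *v (x::real^'n) = (\<Sum>j\<in>S. A j *v x)"
  by (induction S rule: infinite_finite_induct) (auto simp: matrix_vector_mult_add_rdistrib)

lemma transpose_sum: "transpose (\<Sum>j\<in>S. (A j::real^'n^'n)) = (\<Sum>j\<in>S. transpose (A j))"
  by (induction S rule: infinite_finite_induct) (auto simp: transpose_def vec_eq_iff)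

lemma inv_props:
  fixes C :: "real^'n^'n"
  assumes "invertible C"
  shows "C ** matrix_inv C = mat 1" "matrix_inv C ** C = mat 1"
  using assms unfolding invertible_def matrix_inv_def by (metis (mono_tags, lifting) someI_ex)+

lemma inv_sym:
  fixes C :: "real^'n^'n"
  assumes "invertible C" "transpose C = C"
  shows "transpose (matrix_inv C) = matrix_inv C"
proof -
  have "transpose (matrix_inv C) ** C = mat 1"
    using inv_props(1)[OF assms(1)] assms(2) by (metis matrix_transpose_mul transpose_mat)
  have "transpose (matrix_inv C) = transpose (matrix_inv C) ** (C ** matrix_inv C)"
    using inv_props(1)[OF assms(1)] by (simp add: matrix_mul_rid)
  also have "\<dots> = (transpose (matrix_inv C) ** C) ** matrix_inv C"
    by (simp add: matrix_mul_assoc)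
  also have "\<dots> = matrix_inv C" using \<open>transpose (matrix_inv C) ** C = mat 1\<close>
    by (simp add: matrix_mul_lid)
  finally show ?thesis .
qed

lemma M_sym: "transpose (Mmat a b f') = Mmat a b f'"
  unfolding Mmat_def transpose_def by (simp add: vec_eq_iff mult.commute)

lemma C_sym: "transpose (Cmat a b f f') = Cmat a b f f'"
  unfolding Cmat_def Mmat_def outer_def transpose_def by (simp add: vec_eq_iff mult.commute)

lemma mv_scale: "A *v (c *\<^sub>R (x::real^'n)) = c *\<^sub>R (A *v x)"
  unfolding matrix_vector_mult_def by (simp add: vec_eq_iff sum_distrib_left mult_ac)

lemma scale_mv: "(c *\<^sub>R A) *v (x::real^'n) = c *\<^sub>R (A *v x)"
  unfolding matrix_vector_mult_def by (simp add: vec_eq_iff sum_distrib_left mult_ac)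

lemma neg_mv: "(- A) *v (x::real^'n) = - (A *v x)"
  unfolding matrix_vector_mult_def by (simp add: vec_eq_iff sum_negf)

lemma mat_sum: "(P::real^'n^'n) ** (\<Sum>j\<in>S. X j) = (\<Sum>j\<in>S. P ** X j)"
  by (induction S rule: infinite_finite_induct) (auto simp: matrix_add_ldistrib)

lemma mat_scale: "(P::real^'n^'n) ** (c *\<^sub>R X) = c *\<^sub>R (P ** X)"
  unfolding matrix_matrix_mult_def by (simp add: vec_eq_iff sum_distrib_left mult_ac)

lemma sandwich:
  fixes Ci Y :: "real^'n^'n"
  assumes "transpose Ci = Ci"
  shows "x \<bullet> ((Ci ** Y ** Ci) *v x) = (Ci *v x) \<bullet> (Y *v (Ci *v x))"
  by (metis assms dot_mv matrix_vector_mul_assoc)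

lemma sumform:
  assumes "unbiased a b f f' t n w"
  shows "(\<Sum>j\<in>{2..n}. ((f (t j) - f (t (j - 1))) \<bullet> v) * (w j \<bullet> u)) = u \<bullet> (Mmat a b f' *v v)"
  using assms unfolding unbiased_def
  by (simp add: sum_mv outer_mv inner_sum_right mult.commute) (simp add: inner_commute)

lemma quad:
  fixes f f' :: "real \<Rightarrow> real^'n"
  assumes "invertible (Cmat a b f f')"
  shows "x \<bullet> (Kmat a b f f' t n w *v x) =
    (\<Sum>j\<in>{2..n}. (t j - t (j - 1)) * (w j \<bullet> (matrix_inv (Cmat a b f f') *v x))^2)
    + (1/a) * (f a \<bullet> (matrix_inv (Cmat a b f f') *v x))^2"
proof -
  define C where "C = Cmat a b f f'"
  define Ci where "Ci = matrix_inv C"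
  define M where "M = Mmat a b f'"
  define u where "u = Ci *v x"
  have sym: "transpose Ci = Ci" unfolding Ci_def C_def using assms C_sym inv_sym by metis
  have CiC: "Ci ** C ** Ci = Ci" using inv_props[OF assms] unfolding Ci_def C_def
    by (simp add: matrix_mul_assoc matrix_mul_rid)
  have e1: "x \<bullet> ((Ci ** M ** Ci) *v x) = u \<bullet> (M *v u)" using sandwich[OF sym] u_def by simp
  have e2: "x \<bullet> ((\<Sum>j\<in>{2..n}. (t j - t (j - 1)) *\<^sub>R (Ci ** outer (w j) (w j) ** Ci)) *v x)
      = (\<Sum>j\<in>{2..n}. (t j - t (j - 1)) * (w j \<bullet> u)^2)"
    by (simp add: sum_mv scale_mv inner_sum_right sandwich[OF sym] u_def[symmetric] outer_mv
         power2_eq_square inner_commute)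
  have e3: "x \<bullet> (Ci *v x) = u \<bullet> (M *v u) + (1/a) * (f a \<bullet> u)^2"
  proof -
    have "x \<bullet> (Ci *v x) = x \<bullet> ((Ci ** C ** Ci) *v x)" using CiC by simp
    also have "\<dots> = u \<bullet> (C *v u)" using sandwich[OF sym] u_def by simp
    also have "\<dots> = u \<bullet> (M *v u) + (1/a) * (f a \<bullet> u)^2"
      unfolding C_def Cmat_def M_def
      by (simp add: matrix_vector_mult_add_rdistrib inner_add_right scale_mv outer_mv
          power2_eq_square inner_commute)
    finally show ?thesis .
  qed
  show ?thesis
    unfolding Kmat_def Let_def C_def[symmetric] Ci_def[symmetric] M_def[symmetric] u_def[symmetric]
    by (simp only: matrix_vector_mult_add_rdistrib inner_add_right neg_mv inner_minus_right e1 e2 e3)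
qed

lemma wopt_unb:
  fixes f f' :: "real \<Rightarrow> real^'n"
  assumes "design a b t n" "invertible (Bmat f t n)"
  shows "unbiased a b f f' t n (wopt a b f f' t n)"
proof -
  define P where "P = Mmat a b f' ** matrix_inv (Bmat f t n)"
  have "(\<Sum>j\<in>{2..n}. outer (wopt a b f f' t n j) (f (t j) - f (t (j - 1))))
     = P ** Bmat f t n"
    unfolding wopt_def P_def[symmetric]
    by (simp add: Bmat_def mat_sum mat_scale mat_outer mv_scale outer_scale)
  also have "\<dots> = Mmat a b f'" unfolding P_def using inv_props(2)[OF assms(2)]
    by (metis matrix_mul_assoc matrix_mul_rid)
  finally show ?thesis unfolding unbiased_def by simp
qed

lemma wopt_min:
  fixes f f' :: "real \<Rightarrow> real^'n" and u :: "real^'n" and w :: "nat \<Rightarrow> real^'n"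
  assumes "design a b t n" "invertible (Bmat f t n)" "unbiased a b f f' t n w"
  shows "(\<Sum>j\<in>{2..n}. (t j - t (j - 1)) * (wopt a b f f' t n j \<bullet> u)^2)
       \<le> (\<Sum>j\<in>{2..n}. (t j - t (j - 1)) * (w j \<bullet> u)^2)"
proof -
  define P where "P = Mmat a b f' ** matrix_inv (Bmat f t n)"
  define v where "v = transpose P *v u"
  define D where "D j = t j - t (j - 1)" for j
  define d where "d j = f (t j) - f (t (j - 1))" for j
  define al where "al j = wopt a b f f' t n j \<bullet> u" for j
  define be where "be j = w j \<bullet> u" for j
  have Dpos: "D j > 0" if "j \<in> {2..n}" for j using assms(1) that unfolding design_def D_def by auto
  have Dal: "D j * al j = d j \<bullet> v" if "j \<in> {2..n}" for j
  proof -
    have "D j * al j = (P *v d j) \<bullet> u" using Dpos[OF that]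
      unfolding al_def wopt_def P_def[symmetric] d_def[symmetric] D_def[symmetric]
      by (simp add: mv_scale)
    also have "\<dots> = d j \<bullet> v" unfolding v_def by (metis dot_mv inner_commute)
    finally show ?thesis .
  qed
  have s1: "(\<Sum>j\<in>{2..n}. D j * al j * be j) = u \<bullet> (Mmat a b f' *v v)"
    using sumform[OF assms(3), where v=v and u=u] Dal unfolding be_def d_def
    by (simp add: D_def d_def)
  have s2: "(\<Sum>j\<in>{2..n}. D j * al j * al j) = u \<bullet> (Mmat a b f' *v v)"
    using sumform[OF wopt_unb[OF assms(1,2)], where v=v and u=u] Dal unfolding al_def d_def
    by (simp add: D_def d_def)
  have "(\<Sum>j\<in>{2..n}. D j * (be j)^2) =
     (\<Sum>j\<in>{2..n}. D j * (al j)^2 + D j * (be j - al j)^2 + 2 * (D j * al j * be j) - 2 * (D j * al j * al j))"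
    by (rule sum.cong) (auto simp: power2_eq_square algebra_simps)
  also have "\<dots> = (\<Sum>j\<in>{2..n}. D j * (al j)^2) + (\<Sum>j\<in>{2..n}. D j * (be j - al j)^2)"
    by (simp add: sum.distrib sum_subtractf sum_distrib_left[symmetric] s1 s2)
  also have "\<dots> \<ge> (\<Sum>j\<in>{2..n}. D j * (al j)^2)"
    using Dpos by (auto intro!: sum_nonneg mult_nonneg_nonneg simp: less_imp_le)
  finally show ?thesis unfolding D_def al_def be_def by simp
qed

lemma gpart_nonneg:
  assumes "invertible (Cmat a b f f')" "0 < a" "design a b t n"
  shows "0 \<le> gpart a b f f' t n w s"
proof -
  have D: "0 \<le> t j - t (j - 1)" if "j \<in> {2..n}" for j
    using assms(3) that unfolding design_def by (simp add: less_imp_le)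
  have "0 \<le> (\<Sum>j\<in>{2..n}. (t j - t (j - 1)) * (w j \<bullet> (matrix_inv (Cmat a b f f') *v f s))^2)"
    by (intro sum_nonneg mult_nonneg_nonneg D zero_le_power2)
  moreover have "0 \<le> (1/a) * (f a \<bullet> (matrix_inv (Cmat a b f f') *v f s))^2"
    using assms(2) by (intro mult_nonneg_nonneg zero_le_power2) simp
  ultimately show ?thesis unfolding gpart_def quad[OF assms(1)] by (rule add_nonneg_nonneg)
qed

lemma gpart_le: "invertible (Cmat a b f f') \<Longrightarrow> design a b t n \<Longrightarrow> invertible (Bmat f t n)
   \<Longrightarrow> unbiased a b f f' t n w
   \<Longrightarrow> gpart a b f f' t n (wopt a b f f' t n) s \<le> gpart a b f f' t n w s"
  unfolding gpart_def
  by (simp only: quad) (intro add_right_mono wopt_min; assumption)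

lemma gpart_cont:
  assumes "continuous_on {a..b} f"
  shows "continuous_on {a..b} (gpart a b f f' t n w)"
proof -
  have "continuous_on {a..b} (\<lambda>s. Kmat a b f f' t n w *v f s)"
    by (rule linear_continuous_on_compose[OF assms matrix_vector_mul_linear])
  then have "continuous_on {a..b} (\<lambda>s. f s \<bullet> (Kmat a b f f' t n w *v f s))"
    by (rule continuous_on_inner[OF assms])
  then show ?thesis unfolding gpart_def by simp
qed

theorem theorem4p1:
  fixes a b :: real
    and f1 f1' :: "real \<Rightarrow> real^'m1" and f2 f2' :: "real \<Rightarrow> real^'m2"
    and t1 t2 :: "nat \<Rightarrow> real" and n1 n2 :: nat
  assumes "0 < a" "a < b"
    and "C1_with a b f1 f1'" "C1_with a b f2 f2'"
    and "lin_indep_on {a..b} f1" "lin_indep_on {a..b} f2"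
    and "design a b t1 n1" "design a b t2 n2"
    and "invertible (Cmat a b f1 f1')" "invertible (Cmat a b f2 f2')"
    and "invertible (Bmat f1 t1 n1)" "invertible (Bmat f2 t2 n2)"
  defines "g \<equiv> \<lambda>w1 w2 s. gpart a b f1 f1' t1 n1 w1 s + gpart a b f2 f2' t2 n2 w2 s"
    and "w1s \<equiv> wopt a b f1 f1' t1 n1" and "w2s \<equiv> wopt a b f2 f2' t2 n2"
  shows "unbiased a b f1 f1' t1 n1 w1s \<and> unbiased a b f2 f2' t2 n2 w2s
    \<and> (\<forall>w1 w2. unbiased a b f1 f1' t1 n1 w1 \<and> unbiased a b f2 f2' t2 n2 w2 \<longrightarrow>
          (\<forall>p::real. 1 \<le> p \<longrightarrow> mu_p a b p (g w1s w2s) \<le> mu_p a b p (g w1 w2))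
          \<and> mu_inf a b (g w1s w2s) \<le> mu_inf a b (g w1 w2))"
proof -
  have fc1: "continuous_on {a..b} f1" using assms(3) unfolding C1_with_def
    by (auto intro: continuous_on_vector_derivative)
  have fc2: "continuous_on {a..b} f2" using assms(4) unfolding C1_with_def
    by (auto intro: continuous_on_vector_derivative)
  have u1: "unbiased a b f1 f1' t1 n1 w1s" unfolding w1s_def by (rule wopt_unb[OF assms(7,11)])
  have u2: "unbiased a b f2 f2' t2 n2 w2s" unfolding w2s_def by (rule wopt_unb[OF assms(8,12)])
  have gc: "continuous_on {a..b} (g w1 w2)" for w1 w2
    unfolding g_def using gpart_cont[OF fc1] gpart_cont[OF fc2] by (intro continuous_intros)
  have gnn: "0 \<le> g w1 w2 s" for w1 w2 s
    unfolding g_def by (intro add_nonneg_nonneg gpart_nonneg assms(1,7,8,9,10))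
  have main: "(\<forall>p::real. 1 \<le> p \<longrightarrow> mu_p a b p (g w1s w2s) \<le> mu_p a b p (g w1 w2))
          \<and> mu_inf a b (g w1s w2s) \<le> mu_inf a b (g w1 w2)"
    if h1: "unbiased a b f1 f1' t1 n1 w1" and h2: "unbiased a b f2 f2' t2 n2 w2" for w1 w2
  proof -
    have le: "g w1s w2s s \<le> g w1 w2 s" for s
      unfolding g_def w1s_def w2s_def
      using gpart_le[OF assms(9,7,11) h1] gpart_le[OF assms(10,8,12) h2] by (rule add_mono)
    have P: "mu_p a b p (g w1s w2s) \<le> mu_p a b p (g w1 w2)" if "1 \<le> p" for p
    proof -
      have ic: "continuous_on {a..b} (\<lambda>s. g v1 v2 s powr p)" for v1 v2
        using that gnn by (intro continuous_on_powr' gc continuous_on_const) auto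
      have "integral {a..b} (\<lambda>s. g w1s w2s s powr p) \<le> integral {a..b} (\<lambda>s. g w1 w2 s powr p)"
        using that by (intro integral_le integrable_continuous_interval ic powr_mono2 gnn le) auto
      moreover have "0 \<le> integral {a..b} (\<lambda>s. g w1s w2s s powr p)"
        by (intro integral_nonneg integrable_continuous_interval ic) auto
      ultimately show ?thesis unfolding mu_p_def using that by (intro powr_mono2) auto
    qed
    have bdd: "bdd_above (g w1 w2 ` {a..b})"
      by (intro bounded_imp_bdd_above compact_imp_bounded compact_continuous_image gc compact_Icc)
    have I: "mu_inf a b (g w1s w2s) \<le> mu_inf a b (g w1 w2)"
    proof -
      have ex: "\<And>n. n \<in> {a..b} \<Longrightarrow> \<exists>m\<in>{a..b}. g w1s w2s n \<le> g w1 w2 m" using le by blast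
      show ?thesis unfolding mu_inf_def using assms(2) by (intro cSUP_mono bdd ex) auto
    qed
    show ?thesis using P I by blast
  qed
  show ?thesis using u1 u2 main by blast
qed

end
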